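(* For every integer $p\ge1$ and every complex $z$ with $e^z\ne1$, $$\sum_{n\ge0}\mathcal{B}_{n,p}\frac{z^n}{n!}=\frac{p\,\exp(e^z-1)}{(e^z-1)^p}\,\gamma\big(p,e^z-1\big).$$
   Context: $\gamma(s,w)=\int_0^w e^{-t}t^{s-1}\,dt$ is the lower incomplete gamma function (for integer $s\ge1$ an entire function of $w$). For an integer $p\ge0$, the $p$-Bell numbers $\mathcal{B}_{n,p}$ are defined by $\sum_{n\ge0}\mathcal{B}_{n,p}\frac{z^n}{n!}=\sum_{n\ge0}\binom{n+p}{p}^{-1}\frac{(e^z-1)^n}{n!}$ (an entire function of $z$ whose Taylor series is the left side). *)

theory Defs
  imports "HOL-Complex_Analysis.Complex_Analysis"
begin

text \<open>Lower incomplete gamma function for integer s \<ge> 1, as an entire function of w: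
  integral of e^(-t) t^(s-1) along the straight segment from 0 to w
  (path independent, since the integrand is entire).\<close>
definition lower_gamma :: "nat \<Rightarrow> complex \<Rightarrow> complex" where
  "lower_gamma s w = contour_integral (linepath 0 w) (\<lambda>t. exp (- t) * t ^ (s - 1))"

text \<open>The entire function whose Taylor series is the exponential generating function
  of the p-Bell numbers.\<close>
definition pBell_egf :: "nat \<Rightarrow> complex \<Rightarrow> complex" where
  "pBell_egf p z = (\<Sum>n. (exp z - 1) ^ n / (of_nat ((n + p) choose p) * fact n))"

definition pBell :: "nat \<Rightarrow> nat \<Rightarrow> complex" where
  "pBell p n = (deriv ^^ n) (pBell_egf p) 0"

end

theory Submission
  imports Defs
begin

definition cf :: "nat \<Rightarrow> nat \<Rightarrow> complex" where
  "cf p n = 1 / (of_nat ((n + p) choose p) * fact n)"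

lemma egf_eq: "pBell_egf p z = (\<Sum>n. cf p n * (exp z - 1) ^ n)"
  unfolding pBell_egf_def cf_def by (simp add: field_simps)

lemma cf_sums:
  fixes w :: complex
  assumes "w \<noteq> 0"
  shows "(\<lambda>n. cf p n * w ^ n) sums (fact p / w ^ p * (exp w - (\<Sum>k<p. w ^ k / fact k)))"
proof -
  have e: "(\<lambda>n. w ^ n / fact n) sums exp w"
    using exp_converges[of w] by (simp add: scaleR_conv_of_real divide_inverse mult.commute)
  have "(\<lambda>n. w ^ (n + p) / fact (n + p)) sums (exp w - (\<Sum>k<p. w ^ k / fact k))"
    using sums_iff_shift[of "\<lambda>n. w ^ n / fact n" p] e by simp
  then have s: "(\<lambda>n. fact p / w ^ p * (w ^ (n + p) / fact (n + p))) sums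
      (fact p / w ^ p * (exp w - (\<Sum>k<p. w ^ k / fact k)))"
    by (rule sums_mult)
  have eq: "cf p n * w ^ n = fact p / w ^ p * (w ^ (n + p) / fact (n + p))" for n
  proof -
    have "fact p * fact n * ((n + p) choose p) = (fact (n + p) :: nat)"
      using binomial_fact_lemma[of p "n + p"] by simp
    then have f: "(fact p * fact n * of_nat ((n + p) choose p) :: complex) = fact (n + p)"
      by (metis of_nat_fact of_nat_mult)
    have nz: "(of_nat ((n + p) choose p) :: complex) \<noteq> 0" by simp
    show ?thesis unfolding cf_def using assms nz
      by (simp add: f[symmetric] power_add field_simps)
  qed
  show ?thesis using s by (simp add: eq)
qed

lemma cf_summable: "summable (\<lambda>n. cf p n * (w::complex) ^ n)"
proof (cases "w = 0")
  case True
  then show ?thesis by simp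
next
  case False
  then show ?thesis using cf_sums sums_summable by blast
qed

lemma egf_holo: "pBell_egf p holomorphic_on UNIV"
proof -
  have d: "((\<lambda>x. \<Sum>n. cf p n * x ^ n) has_field_derivative (\<Sum>n. diffs (cf p) n * x ^ n)) (at x)" for x
    by (rule termdiffs_strong_converges_everywhere) (rule cf_summable)
  have "(\<lambda>x. \<Sum>n. cf p n * x ^ n) holomorphic_on UNIV"
    using d holomorphic_on_open open_UNIV by blast
  then have "((\<lambda>x. \<Sum>n. cf p n * x ^ n) \<circ> (\<lambda>z. exp z - 1)) holomorphic_on UNIV"
    by (intro holomorphic_on_compose holomorphic_intros holomorphic_on_subset[OF \<open>_ holomorphic_on UNIV\<close>]) auto
  then show ?thesis by (simp add: egf_eq[abs_def] o_def)
qed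

lemma S_deriv:
  "((\<lambda>t::complex. \<Sum>k<Suc m. t ^ k / fact k) has_field_derivative (\<Sum>k<m. t ^ k / fact k)) (at t)"
proof (induction m)
  case 0
  then show ?case by simp
next
  case (Suc m)
  have d2: "((\<lambda>t::complex. t ^ Suc m / fact (Suc m)) has_field_derivative
      (of_nat (Suc m) * t ^ m / fact (Suc m))) (at t)"
    using DERIV_cdivide[OF DERIV_power_Suc[OF DERIV_ident, where n=m and x=t], of "fact (Suc m)"] by (simp add: algebra_simps)
  have "of_nat (Suc m) * t ^ m / fact (Suc m) = t ^ m / (fact m :: complex)"
    unfolding fact_Suc of_nat_mult by (rule mult_divide_mult_cancel_left) (simp del: of_nat_Suc)
  then show ?case using DERIV_add[OF Suc d2] by simp
qed

lemma lower_gamma_eq: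
  assumes "p \<ge> 1"
  shows "lower_gamma p w = fact (p - 1) * (1 - exp (- w) * (\<Sum>k<p. w ^ k / fact k))"
proof -
  obtain m where pm: "p = Suc m" using assms by (cases p) auto
  define F where "F t = - fact m * exp (- t) * (\<Sum>k<Suc m. t ^ k / fact k)" for t :: complex
  have D: "(F has_field_derivative exp (- t) * t ^ m) (at t)" for t
  proof -
    have "(F has_field_derivative
        (- fact m * (- exp (- t)) * (\<Sum>k<Suc m. t ^ k / fact k) + - fact m * exp (- t) * (\<Sum>k<m. t ^ k / fact k))) (at t)"
    proof -
      have e: "((\<lambda>t::complex. - fact m * exp (- t)) has_field_derivative (- fact m * (- exp (- t)))) (at t)"
        by (auto intro!: derivative_eq_intros)
      show ?thesis unfolding F_def[abs_def] using DERIV_mult[OF e S_deriv[of m t]] by (simp only: mult.commute[of "\<Sum>k<m. t ^ k / fact k"])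
    qed
    moreover have "- fact m * (- exp (- t)) * (\<Sum>k<Suc m. t ^ k / fact k) + - fact m * exp (- t) * (\<Sum>k<m. t ^ k / fact k)
        = exp (- t) * t ^ m"
      by (simp add: field_simps)
    ultimately show ?thesis by simp
  qed
  have "((\<lambda>t. exp (- t) * t ^ (p - 1)) has_contour_integral (F (pathfinish (linepath 0 w)) - F (pathstart (linepath 0 w)))) (linepath 0 w)"
  proof (rule contour_integral_primitive[where S = UNIV])
    show "valid_path (linepath 0 w)" by (rule valid_path_linepath)
  qed (use D pm in \<open>auto intro: has_field_derivative_at_within\<close>)
  then have "lower_gamma p w = F w - F 0"
    unfolding lower_gamma_def by (simp add: contour_integral_unique)
  also have "\<dots> = fact (p - 1) * (1 - exp (- w) * (\<Sum>k<p. w ^ k / fact k))"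
    unfolding F_def pm by (simp add: field_simps lessThan_Suc_eq_insert_0 sum.reindex)
  finally show ?thesis .
qed

theorem mainTheorem4:
  fixes p :: nat and z :: complex
  assumes "p \<ge> 1" and "exp z \<noteq> 1"
  shows "(\<lambda>n. pBell p n * z ^ n / fact n) sums
           (of_nat p * exp (exp z - 1) / (exp z - 1) ^ p * lower_gamma p (exp z - 1))"
proof -
  define w where "w = exp z - 1"
  have w0: "w \<noteq> 0" using assms(2) w_def by simp
  have "(\<lambda>n. (deriv ^^ n) (pBell_egf p) 0 / fact n * (z - 0) ^ n) sums pBell_egf p z"
    by (rule holomorphic_power_series[where r = "norm z + 1"])
       (auto intro: holomorphic_on_subset[OF egf_holo])
  then have s: "(\<lambda>n. pBell p n * z ^ n / fact n) sums pBell_egf p z"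
    by (simp add: pBell_def field_simps)
  have v: "pBell_egf p z = fact p / w ^ p * (exp w - (\<Sum>k<p. w ^ k / fact k))"
    using cf_sums[OF w0, of p] unfolding egf_eq w_def by (simp add: sums_iff)
  have fp: "(fact p :: complex) = of_nat p * fact (p - 1)"
    using assms(1) by (metis Suc_diff_1 fact_Suc le_less_trans less_one not_less of_nat_fact of_nat_mult order_refl)
  have "of_nat p * exp w / w ^ p * lower_gamma p w
      = of_nat p * fact (p - 1) / w ^ p * (exp w * (1 - exp (- w) * (\<Sum>k<p. w ^ k / fact k)))"
    using lower_gamma_eq[OF assms(1)] by simp
  also have "\<dots> = fact p / w ^ p * (exp w - (\<Sum>k<p. w ^ k / fact k))"
    by (simp add: fp right_diff_distrib exp_minus field_simps)
  finally have X: "of_nat p * exp w / w ^ p * lower_gamma p w = fact p / w ^ p * (exp w - (\<Sum>k<p. w ^ k / fact k))" .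
  show ?thesis unfolding w_def[symmetric] X using s unfolding v .
qed

end
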